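(* There exists a universal constant $c>0$ such that the following holds. Let $n\in\mathbb{N}$, $q$ a prime power, $1\le\ell<q$ an integer, and $\rho\in(0,1-\ell/q)$. Let $T_1,\dots,T_n\subseteq\mathbb{F}_q$ each have size $\ell$. If $n\ge\left(\frac{\log q}{\rho(1-\ell/q-\rho)}\right)^{c}$, then the list-recovery ball $B_\rho(T_1\times\cdots\times T_n)$ is $\delta$-mixing for $$\delta=\log_q\left(\frac{(q-\ell)(1-\rho)}{\rho\ell}\right)\cdot\frac{\rho^4(1-\ell/q-\rho)^2}{16\log q}.$$
   Context: $\log$ is base 2. $B_\rho(T_1\times\cdots\times T_n)=\{x\in\mathbb{F}_q^n: |\{i:x_i\notin T_i\}|\le\rho n\}$. A set $T\subseteq\mathbb{F}_q^n$ is $\delta$-mixing if for all nonzero $\alpha,\beta\in\mathbb{F}_q$ and all $z\in\mathbb{F}_q^n$, $\Pr[\alpha X+\beta X'\in T+z]\le q^{-\delta n}$, where $X,X'$ are independent and uniform on $T$. *)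

theory Defs
  imports "HOL-Algebra.Ring" "HOL-Algebra.QuotRing" "HOL-Analysis.Analysis"
begin

text \<open>The finite field F_q is an HOL-Algebra field R (with carrier a finite set of
naturals, so that the universal constant can be quantified before the field);
q = card (carrier R).\<close>

definition fvecs :: "('a, 'b) ring_scheme \<Rightarrow> nat \<Rightarrow> (nat \<Rightarrow> 'a) set" where
  "fvecs R n = PiE {..<n} (\<lambda>_. carrier R)"

definition lr_ball :: "('a, 'b) ring_scheme \<Rightarrow> nat \<Rightarrow> real \<Rightarrow> (nat \<Rightarrow> 'a set) \<Rightarrow> (nat \<Rightarrow> 'a) set" where
  "lr_ball R n \<rho> T = {x \<in> fvecs R n. real (card {i \<in> {..<n}. x i \<notin> T i}) \<le> \<rho> * real n}"

definition vtrans :: "('a, 'b) ring_scheme \<Rightarrow> nat \<Rightarrow> (nat \<Rightarrow> 'a) set \<Rightarrow> (nat \<Rightarrow> 'a) \<Rightarrow> (nat \<Rightarrow> 'a) set" where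
  "vtrans R n T z = (\<lambda>t. restrict (\<lambda>i. t i \<oplus>\<^bsub>R\<^esub> z i) {..<n}) ` T"

definition vlin :: "('a, 'b) ring_scheme \<Rightarrow> nat \<Rightarrow> 'a \<Rightarrow> (nat \<Rightarrow> 'a) \<Rightarrow> 'a \<Rightarrow> (nat \<Rightarrow> 'a) \<Rightarrow> (nat \<Rightarrow> 'a)" where
  "vlin R n \<alpha> x \<beta> y = restrict (\<lambda>i. \<alpha> \<otimes>\<^bsub>R\<^esub> x i \<oplus>\<^bsub>R\<^esub> \<beta> \<otimes>\<^bsub>R\<^esub> y i) {..<n}"

text \<open>delta-mixing: Pr over independent uniform X, X' in T (T finite, nonempty here).\<close>
definition mixing :: "('a, 'b) ring_scheme \<Rightarrow> nat \<Rightarrow> real \<Rightarrow> (nat \<Rightarrow> 'a) set \<Rightarrow> bool" where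
  "mixing R n \<delta> T \<longleftrightarrow>
     (\<forall>\<alpha> \<in> carrier R - {\<zero>\<^bsub>R\<^esub>}. \<forall>\<beta> \<in> carrier R - {\<zero>\<^bsub>R\<^esub>}. \<forall>z \<in> fvecs R n.
        real (card {(x, y) \<in> T \<times> T. vlin R n \<alpha> x \<beta> y \<in> vtrans R n T z}) / real (card T) ^ 2
          \<le> real (card (carrier R)) powr (- \<delta> * real n))"

end

theory Submission
  imports Defs
begin

lemma binom_step: "j < n \<Longrightarrow> (n choose Suc j) * Suc j = (n choose j) * (n - j)"
  by (metis binomial_absorb_comp binomial_absorption mult.commute)

lemma mode_bound:
  fixes n k :: nat
  assumes "0 < k" "k < n"
  defines "r \<equiv> real k / real n"
  shows "real (n choose k) * r ^ k * (1 - r) ^ (n - k) \<ge> 1 / (real n + 1)"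
proof -
  define t where "t j = real (n choose j) * r ^ j * (1 - r) ^ (n - j)" for j
  have r0: "0 < r" and r1: "r < 1" using assms by (auto simp: r_def field_simps)
  have tnn: "t j \<ge> 0" for j using r0 r1 by (simp add: t_def)
  have rec: "t (Suc j) * (real (Suc j) * (1 - r)) = t j * (real (n - j) * r)" if "j < n" for j
  proof -
    have e: "(1 - r) ^ (n - Suc j) * (1 - r) = (1 - r) ^ (n - j)"
      using that by (metis Suc_diff_Suc power_Suc2)
    have b: "real (n choose Suc j) * real (Suc j) = real (n choose j) * real (n - j)"
      using binom_step[OF that] by (metis of_nat_mult)
    have "t (Suc j) * (real (Suc j) * (1 - r)) = (real (n choose Suc j) * real (Suc j)) * r ^ Suc j * ((1 - r) ^ (n - Suc j) * (1 - r))"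
      by (simp add: t_def algebra_simps)
    also have "\<dots> = real (n choose j) * real (n - j) * r ^ Suc j * (1 - r) ^ (n - j)"
      by (simp only: e b)
    also have "\<dots> = t j * (real (n - j) * r)" by (simp add: t_def algebra_simps)
    finally show ?thesis .
  qed
  have up: "t j \<le> t (Suc j)" if "j < k" for j
  proof -
    have jn: "j < n" using that assms by simp
    have "real (Suc j) * (1 - r) \<le> real (n - j) * r"
    proof -
      have "real (Suc j) \<le> real k" using that by simp
      hence "real (Suc j) * (real n - real k) \<le> real k * (real n - real k)"
        using assms by (intro mult_right_mono) auto
      also have "\<dots> \<le> real k * real (n - j)" using jn that by (intro mult_left_mono) auto
      finally have "real (Suc j) * (real n - real k) \<le> real (n - j) * real k" by (simp add: mult.commute)
      hence "real (Suc j) * (real n - real k) / real n \<le> real (n - j) * real k / real n"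
        by (intro divide_right_mono) auto
      moreover have "1 - r = (real n - real k) / real n" using assms by (simp add: r_def field_simps)
      ultimately show ?thesis by (simp add: r_def)
    qed
    hence "t j * (real (Suc j) * (1 - r)) \<le> t j * (real (n - j) * r)"
      using tnn by (intro mult_left_mono) auto
    also have "\<dots> = t (Suc j) * (real (Suc j) * (1 - r))" using rec[OF jn] by simp
    finally show ?thesis using r1 by (simp add: mult_le_cancel_right)
  qed
  have down: "t (Suc j) \<le> t j" if "k \<le> j" "j < n" for j
  proof -
    have "real (n - j) * r \<le> real (Suc j) * (1 - r)"
    proof -
      have "real (n - j) * real k \<le> (real n - real k) * real k"
        using that by (intro mult_right_mono) auto
      also have "\<dots> \<le> (real n - real k) * real (Suc j)" using that assms by (intro mult_left_mono) auto
      finally have "real (n - j) * real k \<le> real (Suc j) * (real n - real k)" by (simp add: mult.commute)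
      hence "real (n - j) * real k / real n \<le> real (Suc j) * (real n - real k) / real n"
        by (intro divide_right_mono) auto
      moreover have "1 - r = (real n - real k) / real n" using assms by (simp add: r_def field_simps)
      ultimately show ?thesis by (simp add: r_def)
    qed
    hence "t (Suc j) * (real (Suc j) * (1 - r)) \<le> t (Suc j) * (real (Suc j) * (1 - r)) * 1" by simp
    have "t (Suc j) * (real (Suc j) * (1 - r)) = t j * (real (n - j) * r)" using rec that by simp
    also have "\<dots> \<le> t j * (real (Suc j) * (1 - r))"
      using tnn \<open>real (n - j) * r \<le> _\<close> by (intro mult_left_mono) auto
    finally show ?thesis using r1 by (simp add: mult_le_cancel_right)
  qed
  have le1: "t j \<le> t k" if "j \<le> k" for j
    using that
  proof (induction "k - j" arbitrary: j)
    case 0 thus ?case by simp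
  next
    case (Suc d)
    hence "j < k" by simp
    hence "t (Suc j) \<le> t k" using Suc by (intro Suc.hyps) auto
    thus ?case using up[OF \<open>j < k\<close>] by simp
  qed
  have le2: "t j \<le> t k" if "k \<le> j" "j \<le> n" for j
    using that
  proof (induction j)
    case 0 thus ?case by simp
  next
    case (Suc j)
    show ?case
    proof (cases "k = Suc j")
      case True thus ?thesis by simp
    next
      case False
      hence "k \<le> j" using Suc by simp
      thus ?thesis using Suc down[of j] by simp
    qed
  qed
  have "1 = (r + (1 - r)) ^ n" by simp
  also have "\<dots> = (\<Sum>j\<le>n. t j)" unfolding binomial_ring t_def by (simp add: mult.commute mult.left_commute)
  also have "\<dots> \<le> (\<Sum>j\<le>n. t k)"
    apply (rule sum_mono) using le1 le2 by (metis nat_le_linear atMost_iff)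
  also have "\<dots> = (real n + 1) * t k" by simp
  finally have "1 \<le> (real n + 1) * t k" .
  thus ?thesis by (simp add: t_def field_simps mult.commute)
qed

lemma field_count:
  assumes "field R" "finite (carrier R)" "T \<subseteq> carrier R" "\<gamma> \<in> carrier R" "\<gamma> \<noteq> \<zero>\<^bsub>R\<^esub>" "c \<in> carrier R"
  shows "card {v \<in> carrier R. \<gamma> \<otimes>\<^bsub>R\<^esub> v \<oplus>\<^bsub>R\<^esub> c \<in> T} = card T"
proof -
  interpret F: field R by fact
  define f where "f v = \<gamma> \<otimes>\<^bsub>R\<^esub> v \<oplus>\<^bsub>R\<^esub> c" for v
  have inj: "inj_on f (carrier R)"
  proof (rule inj_onI)
    fix x y assume xy: "x \<in> carrier R" "y \<in> carrier R" "f x = f y"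
    hence "\<gamma> \<otimes>\<^bsub>R\<^esub> x = \<gamma> \<otimes>\<^bsub>R\<^esub> y" using assms unfolding f_def
      by (simp add: F.add.right_cancel)
    thus "x = y" using xy assms F.m_lcancel by blast
  qed
  have im: "f ` carrier R = carrier R"
    using assms inj by (intro endo_inj_surj) (auto simp: f_def)
  have "f ` {v \<in> carrier R. f v \<in> T} = T"
  proof
    show "T \<subseteq> f ` {v \<in> carrier R. f v \<in> T}"
    proof
      fix t assume "t \<in> T"
      then obtain v where "v \<in> carrier R" "t = f v" using im assms by (metis imageE subsetD)
      thus "t \<in> f ` {v \<in> carrier R. f v \<in> T}" using \<open>t \<in> T\<close> by auto
    qed
  qed auto
  moreover have "inj_on f {v \<in> carrier R. f v \<in> T}" using inj by (rule inj_on_subset) auto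
  ultimately show ?thesis unfolding f_def[symmetric] by (metis card_image)
qed


lemma sum_mu:
  fixes A B :: real
  assumes "finite F" "T \<subseteq> F"
  shows "(\<Sum>u\<in>F. if u \<in> T then A else B) = real (card T) * A + real (card (F - T)) * B"
proof -
  have "F \<inter> T = T" "F \<inter> - T = F - T" using assms by auto
  thus ?thesis using assms by (simp add: sum.If_cases)
qed

lemma sum_ind:
  fixes c :: real
  assumes "finite F"
  shows "(\<Sum>v\<in>F. c * (if P v then 1 else 0)) = c * real (card {v\<in>F. P v})"
proof -
  have "(\<Sum>v\<in>F. c * (if P v then 1 else 0)) = (\<Sum>v\<in>F. if P v then c else 0)"
    by (intro sum.cong) auto
  also have "\<dots> = (\<Sum>v\<in>{v\<in>F. P v}. c)" using sum.inter_filter[OF assms, of "\<lambda>_. c" P] by simp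
  finally show ?thesis by simp
qed

lemma coord_bound:
  fixes R :: "('a, 'b) ring_scheme"
  assumes fR: "field R" and fin: "finite (carrier R)" and TF: "T \<subseteq> carrier R" and cT: "card T = l"
    and l1: "1 \<le> l" and lq: "l < card (carrier R)"
    and \<alpha>: "\<alpha> \<in> carrier R" "\<alpha> \<noteq> \<zero>\<^bsub>R\<^esub>" and \<beta>: "\<beta> \<in> carrier R" "\<beta> \<noteq> \<zero>\<^bsub>R\<^esub>" and z: "z \<in> carrier R"
    and r0: "0 \<le> r" and r1: "r \<le> 1" and lam0: "0 \<le> lam" and lam1: "lam \<le> 1"
  defines "q \<equiv> real (card (carrier R))"
  defines "\<mu> \<equiv> (\<lambda>u. if u \<in> T then (1 - r) / real l else r / (q - real l))"
  shows "(\<Sum>u\<in>carrier R. \<Sum>v\<in>carrier R. \<mu> u * \<mu> v *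
            (if \<alpha> \<otimes>\<^bsub>R\<^esub> u \<oplus>\<^bsub>R\<^esub> \<beta> \<otimes>\<^bsub>R\<^esub> v \<ominus>\<^bsub>R\<^esub> z \<notin> T then lam else 1))
         \<le> 1 - (1 - lam) * (2 * r - r ^ 2 * q / (q - real l))"
proof -
  interpret F: field R by fact
  let ?F = "carrier R"
  define L where "L u v \<longleftrightarrow> \<alpha> \<otimes>\<^bsub>R\<^esub> u \<oplus>\<^bsub>R\<^esub> \<beta> \<otimes>\<^bsub>R\<^esub> v \<ominus>\<^bsub>R\<^esub> z \<in> T" for u v
  define a where "a = (1 - r) / real l"
  define b where "b = r / (q - real l)"
  have ql: "q - real l > 0" using lq by (simp add: q_def)
  have lpos: "real l > 0" using l1 by simp
  have a0: "a \<ge> 0" using r1 lpos by (simp add: a_def)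
  have b0: "b \<ge> 0" using r0 ql by (simp add: b_def)
  have mu0: "\<mu> u \<ge> 0" for u using a0 b0 unfolding \<mu>_def a_def b_def by simp
  have cFT: "card (?F - T) = card ?F - l" using TF cT fin by (simp add: card_Diff_subset finite_subset)
  have cFT': "real (card (?F - T)) = q - real l" using cFT lq by (simp add: q_def of_nat_diff)
  have sum1: "(\<Sum>u\<in>?F. \<mu> u) = 1"
  proof -
    have "(\<Sum>u\<in>?F. \<mu> u) = (\<Sum>u\<in>?F. (if u \<in> T then a else b))" unfolding \<mu>_def a_def b_def by simp
    also have "\<dots> = real l * a + (q - real l) * b"
      using sum_mu[OF fin TF] cT cFT' by simp
    also have "\<dots> = 1" using lpos ql by (simp add: a_def b_def)
    finally show ?thesis .
  qed
  have sum2: "(\<Sum>u\<in>?F. \<mu> u ^ 2) = real l * a ^ 2 + (q - real l) * b ^ 2"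
  proof -
    have "(\<Sum>u\<in>?F. \<mu> u ^ 2) = (\<Sum>u\<in>?F. (if u \<in> T then a^2 else b^2))" unfolding \<mu>_def a_def b_def by (intro sum.cong) auto
    also have "\<dots> = real l * a^2 + (q - real l) * b^2"
      using sum_mu[OF fin TF] cT cFT' by simp
    finally show ?thesis .
  qed
  have cnt1: "card {v \<in> ?F. L u v} = l" if u: "u \<in> ?F" for u
  proof -
    have "L u v \<longleftrightarrow> \<beta> \<otimes>\<^bsub>R\<^esub> v \<oplus>\<^bsub>R\<^esub> (\<alpha> \<otimes>\<^bsub>R\<^esub> u \<ominus>\<^bsub>R\<^esub> z) \<in> T" if "v \<in> ?F" for v
      using that u \<alpha> \<beta> z unfolding L_def a_minus_def by (simp add: F.a_ac)
    hence "{v \<in> ?F. L u v} = {v \<in> ?F. \<beta> \<otimes>\<^bsub>R\<^esub> v \<oplus>\<^bsub>R\<^esub> (\<alpha> \<otimes>\<^bsub>R\<^esub> u \<ominus>\<^bsub>R\<^esub> z) \<in> T}" by auto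
    thus ?thesis using field_count[OF fR fin TF \<beta>, of "\<alpha> \<otimes>\<^bsub>R\<^esub> u \<ominus>\<^bsub>R\<^esub> z"] u \<alpha> z cT by simp
  qed
  have cnt2: "card {u \<in> ?F. L u v} = l" if v: "v \<in> ?F" for v
  proof -
    have "L u v \<longleftrightarrow> \<alpha> \<otimes>\<^bsub>R\<^esub> u \<oplus>\<^bsub>R\<^esub> (\<beta> \<otimes>\<^bsub>R\<^esub> v \<ominus>\<^bsub>R\<^esub> z) \<in> T" if "u \<in> ?F" for u
      using that v \<alpha> \<beta> z unfolding L_def a_minus_def by (simp add: F.a_ac)
    hence "{u \<in> ?F. L u v} = {u \<in> ?F. \<alpha> \<otimes>\<^bsub>R\<^esub> u \<oplus>\<^bsub>R\<^esub> (\<beta> \<otimes>\<^bsub>R\<^esub> v \<ominus>\<^bsub>R\<^esub> z) \<in> T}" by auto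
    thus ?thesis using field_count[OF fR fin TF \<alpha>, of "\<beta> \<otimes>\<^bsub>R\<^esub> v \<ominus>\<^bsub>R\<^esub> z"] v \<beta> z cT by simp
  qed
  define p where "p = (\<Sum>u\<in>?F. \<Sum>v\<in>?F. \<mu> u * \<mu> v * (if L u v then 1 else 0))"
  have pP: "p \<le> real l * (real l * a ^ 2 + (q - real l) * b ^ 2)"
  proof -
    have "p \<le> (\<Sum>u\<in>?F. \<Sum>v\<in>?F. (\<mu> u ^ 2 + \<mu> v ^ 2) / 2 * (if L u v then 1 else 0))"
      unfolding p_def
    proof (intro sum_mono)
      fix u v
      have "\<mu> u * \<mu> v \<le> (\<mu> u ^ 2 + \<mu> v ^ 2) / 2"
        using sum_squares_bound[of "\<mu> u" "\<mu> v"] by (simp add: power2_eq_square)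
      thus "\<mu> u * \<mu> v * (if L u v then 1 else 0) \<le> (\<mu> u ^ 2 + \<mu> v ^ 2) / 2 * (if L u v then 1 else 0)"
        by simp
    qed
    also have "\<dots> = (\<Sum>u\<in>?F. \<Sum>v\<in>?F. \<mu> u ^ 2 / 2 * (if L u v then 1 else 0)) +
                    (\<Sum>v\<in>?F. \<Sum>u\<in>?F. \<mu> v ^ 2 / 2 * (if L u v then 1 else 0))"
      by (subst sum.swap[of _ ?F ?F]) (simp add: add_divide_distrib distrib_right sum.distrib)
    also have "\<dots> = (\<Sum>u\<in>?F. \<mu> u ^ 2 / 2 * real l) + (\<Sum>v\<in>?F. \<mu> v ^ 2 / 2 * real l)"
    proof -
      have h1: "(\<Sum>v\<in>?F. \<mu> u ^ 2 / 2 * (if L u v then 1 else 0)) = \<mu> u ^ 2 / 2 * real l" if "u \<in> ?F" for u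
        using cnt1[OF that] sum_ind[OF fin, of "\<mu> u ^ 2 / 2" "L u"] by simp
      have h2: "(\<Sum>u\<in>?F. \<mu> v ^ 2 / 2 * (if L u v then 1 else 0)) = \<mu> v ^ 2 / 2 * real l" if "v \<in> ?F" for v
        using cnt2[OF that] sum_ind[OF fin, of "\<mu> v ^ 2 / 2" "\<lambda>u. L u v"] by simp
      show ?thesis by (metis (no_types, lifting) h1 h2 sum.cong)
    qed
    also have "\<dots> = real l * (\<Sum>u\<in>?F. \<mu> u ^ 2)"
      by (simp add: sum_distrib_left sum_divide_distrib[symmetric] algebra_simps)
    finally show ?thesis using sum2 by simp
  qed
  have "(\<Sum>u\<in>?F. \<Sum>v\<in>?F. \<mu> u * \<mu> v * (if \<not> L u v then lam else 1))
      = (\<Sum>u\<in>?F. \<Sum>v\<in>?F. lam * (\<mu> u * \<mu> v) + (1 - lam) * (\<mu> u * \<mu> v * (if L u v then 1 else 0)))"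
    by (intro sum.cong refl) (simp add: algebra_simps)
  also have "\<dots> = lam * (\<Sum>u\<in>?F. \<Sum>v\<in>?F. \<mu> u * \<mu> v) + (1 - lam) * p"
    by (simp add: sum.distrib sum_distrib_left p_def)
  also have "(\<Sum>u\<in>?F. \<Sum>v\<in>?F. \<mu> u * \<mu> v) = (\<Sum>u\<in>?F. \<mu> u) * (\<Sum>v\<in>?F. \<mu> v)"
    by (simp add: sum_product)
  also have "lam * ((\<Sum>u\<in>?F. \<mu> u) * (\<Sum>v\<in>?F. \<mu> v)) + (1 - lam) * p = lam + (1 - lam) * p" using sum1 by simp
  also have "\<dots> \<le> lam + (1 - lam) * (real l * (real l * a ^ 2 + (q - real l) * b ^ 2))"
    using pP lam1 by (intro add_left_mono mult_left_mono) auto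
  also have "real l * (real l * a ^ 2 + (q - real l) * b ^ 2) = (1 - r) ^ 2 + real l * r ^ 2 / (q - real l)"
  proof -
    have e1: "(q - real l) * b ^ 2 = r ^ 2 / (q - real l)" using ql by (simp add: b_def power2_eq_square)
    have e2: "real l * a ^ 2 = (1 - r) ^ 2 / real l" using lpos by (simp add: a_def power2_eq_square)
    show ?thesis unfolding e1 e2 using lpos by (simp add: distrib_left)
  qed
  also have "(1 - r) ^ 2 + real l * r ^ 2 / (q - real l) = 1 - (2 * r - r ^ 2 * q / (q - real l))"
  proof -
    have "r ^ 2 * q / (q - real l) = r ^ 2 + real l * r ^ 2 / (q - real l)"
      using ql by (simp add: field_simps)
    thus ?thesis by (simp add: power2_eq_square algebra_simps)
  qed
  also have "lam + (1 - lam) * (1 - (2 * r - r ^ 2 * q / (q - real l))) = 1 - (1 - lam) * (2 * r - r ^ 2 * q / (q - real l))"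
    by (simp add: algebra_simps)
  finally show ?thesis unfolding L_def by simp
qed


lemma double_prod_sum:
  fixes G :: "nat \<Rightarrow> 'a \<Rightarrow> 'a \<Rightarrow> real"
  assumes "finite I" "\<And>i. finite (A i)"
  shows "(\<Sum>x\<in>PiE I A. \<Sum>y\<in>PiE I A. \<Prod>i\<in>I. G i (x i) (y i)) = (\<Prod>i\<in>I. \<Sum>u\<in>A i. \<Sum>v\<in>A i. G i u v)"
proof -
  have "(\<Prod>i\<in>I. \<Sum>u\<in>A i. \<Sum>v\<in>A i. G i u v) = (\<Sum>x\<in>PiE I A. \<Prod>i\<in>I. \<Sum>v\<in>A i. G i (x i) v)"
    using prod_sum_PiE[of I A "\<lambda>i u. \<Sum>v\<in>A i. G i u v"] assms by simp
  also have "\<dots> = (\<Sum>x\<in>PiE I A. \<Sum>y\<in>PiE I A. \<Prod>i\<in>I. G i (x i) (y i))"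
    by (intro sum.cong refl prod_sum_PiE) (use assms in auto)
  finally show ?thesis ..
qed

lemma prod_if_card:
  fixes a b :: real
  assumes "finite I"
  shows "(\<Prod>i\<in>I. if P i then a else b) = a ^ card {i\<in>I. P i} * b ^ card {i\<in>I. \<not> P i}"
proof -
  have "I \<inter> {i. P i} = {i\<in>I. P i}" "I \<inter> - {i. P i} = {i\<in>I. \<not> P i}" by auto
  thus ?thesis using assms by (simp add: prod.If_cases)
qed

lemma pow_mono_ab:
  fixes a b :: real
  assumes "0 \<le> b" "b \<le> a" "e \<le> k" "k \<le> n"
  shows "a ^ (n - k) * b ^ k \<le> a ^ (n - e) * b ^ e"
proof -
  have e1: "a ^ (n - e) = a ^ (n - k) * a ^ (k - e)" using assms by (simp add: power_add[symmetric])
  have e2: "b ^ k = b ^ e * b ^ (k - e)" using assms by (simp add: power_add[symmetric])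
  have m: "b ^ (k - e) \<le> a ^ (k - e)" using assms by (intro power_mono) auto
  have z: "0 \<le> a ^ (n - k) * b ^ e" using assms by simp
  have "a ^ (n - k) * b ^ k = (a ^ (n - k) * b ^ e) * b ^ (k - e)" unfolding e2 by (simp only: mult.assoc)
  also have "\<dots> \<le> (a ^ (n - k) * b ^ e) * a ^ (k - e)" using m z by (rule mult_left_mono)
  also have "\<dots> = a ^ (n - e) * b ^ e" unfolding e1 by (simp only: mult_ac)
  finally show ?thesis .
qed

lemma P_errset:
  assumes x: "x \<in> PiE {..<n} (\<lambda>i. if i \<in> S then F - T i else T i)" and S: "S \<subseteq> {..<n}"
  shows "{i \<in> {..<n}. x i \<notin> T i} = S"
proof -
  have h: "x i \<in> (if i \<in> S then F - T i else T i)" if "i < n" for i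
    by (rule PiE_mem[OF x]) (use that in simp)
  show ?thesis
  proof (intro equalityI subsetI)
    fix i assume i: "i \<in> {i \<in> {..<n}. x i \<notin> T i}"
    hence i1: "i < n" and i2: "x i \<notin> T i" by auto
    show "i \<in> S"
    proof (rule ccontr)
      assume ni: "i \<notin> S"
      have "x i \<in> T i" using h[OF i1] unfolding if_not_P[OF ni] .
      thus False using i2 by blast
    qed
  next
    fix i assume i: "i \<in> S"
    hence i1: "i < n" using S by auto
    have "x i \<in> F - T i" using h[OF i1] unfolding if_P[OF i] .
    thus "i \<in> {i \<in> {..<n}. x i \<notin> T i}" using i1 by blast
  qed
qed

lemma card_ball_lower:
  fixes R :: "('a, 'b) ring_scheme"
  assumes fin: "finite (carrier R)" and T: "\<forall>i<n. T i \<subseteq> carrier R \<and> card (T i) = l"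
    and kn: "k \<le> n" and kr: "real k \<le> \<rho> * real n"
  shows "real (n choose k) * real (card (carrier R) - l) ^ k * real l ^ (n - k) \<le> real (card (lr_ball R n \<rho> T))"
proof -
  let ?F = "carrier R"
  define P where "P S = PiE {..<n} (\<lambda>i. if i \<in> S then ?F - T i else T i)" for S
  define SS where "SS = {S. S \<subseteq> {..<n} \<and> card S = k}"
  have finV: "finite (fvecs R n)" unfolding fvecs_def using fin by (simp add: finite_PiE)
  have "lr_ball R n \<rho> T \<subseteq> fvecs R n" unfolding lr_ball_def by blast
  hence finB: "finite (lr_ball R n \<rho> T)" using finV by (rule finite_subset)
  have sub: "\<Union>(P ` SS) \<subseteq> lr_ball R n \<rho> T"
  proof
    fix x assume "x \<in> \<Union>(P ` SS)"
    then obtain S where S: "S \<in> SS" "x \<in> P S" by auto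
    have "P S \<subseteq> fvecs R n" unfolding P_def fvecs_def using T by (intro PiE_mono) auto
    hence xF: "x \<in> fvecs R n" using S by auto
    have "{i \<in> {..<n}. x i \<notin> T i} = S" using S P_errset[of x n S ?F T] unfolding P_def SS_def by auto
    hence "card {i \<in> {..<n}. x i \<notin> T i} = k" using S by (simp add: SS_def)
    thus "x \<in> lr_ball R n \<rho> T" using xF kr by (simp add: lr_ball_def)
  qed
  have cP: "card (P S) = (card ?F - l) ^ k * l ^ (n - k)" if "S \<in> SS" for S
  proof -
    have "card (P S) = (\<Prod>i<n. card (if i \<in> S then ?F - T i else T i))" by (simp add: P_def card_PiE)
    also have "\<dots> = (\<Prod>i<n. if i \<in> S then card ?F - l else l)"
      using T fin by (intro prod.cong refl) (auto simp: card_Diff_subset finite_subset)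
    also have "\<dots> = (card ?F - l) ^ card ({..<n} \<inter> {i. i \<in> S}) * l ^ card ({..<n} \<inter> - {i. i \<in> S})"
      by (simp add: prod.If_cases)
    also have "{..<n} \<inter> {i. i \<in> S} = S" using that by (auto simp: SS_def)
    also have "card ({..<n} \<inter> - {i. i \<in> S}) = n - k"
    proof -
      have "{..<n} \<inter> - {i. i \<in> S} = {..<n} - S" by auto
      moreover have "S \<subseteq> {..<n}" "card S = k" using that by (auto simp: SS_def)
      moreover have "finite S" using \<open>S \<subseteq> {..<n}\<close> finite_subset by blast
      ultimately show ?thesis by (simp add: card_Diff_subset)
    qed
    finally show ?thesis using that by (simp add: SS_def)
  qed
  have disj: "P S \<inter> P S' = {}" if "S \<in> SS" "S' \<in> SS" "S \<noteq> S'" for S S'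
  proof (rule ccontr)
    assume "P S \<inter> P S' \<noteq> {}"
    then obtain x where x: "x \<in> P S" "x \<in> P S'" by auto
    have "S = {i \<in> {..<n}. x i \<notin> T i}" using x(1) that(1) P_errset[of x n S ?F T] unfolding P_def SS_def by auto
    moreover have "S' = {i \<in> {..<n}. x i \<notin> T i}" using x(2) that(2) P_errset[of x n S' ?F T] unfolding P_def SS_def by auto
    ultimately show False using that by simp
  qed
  have finSS: "finite SS" unfolding SS_def by (rule finite_subset[of _ "Pow {..<n}"]) auto
  have finP: "finite (P S)" for S unfolding P_def using fin T by (intro finite_PiE) (auto intro: finite_subset)
  have "card (\<Union>(P ` SS)) = (\<Sum>S\<in>SS. card (P S))"
    using finSS finP disj by (intro card_UN_disjoint) auto
  also have "\<dots> = (\<Sum>S\<in>SS. (card ?F - l) ^ k * l ^ (n - k))" using cP by simp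
  also have "\<dots> = (n choose k) * ((card ?F - l) ^ k * l ^ (n - k))"
    using n_subsets[of "{..<n}" k] by (simp add: SS_def)
  finally have "(n choose k) * ((card ?F - l) ^ k * l ^ (n - k)) \<le> card (lr_ball R n \<rho> T)"
    using card_mono[OF finB sub] by simp
  hence "real ((n choose k) * ((card ?F - l) ^ k * l ^ (n - k))) \<le> real (card (lr_ball R n \<rho> T))"
    by (simp only: of_nat_le_iff)
  thus ?thesis by (simp add: mult.assoc)
qed


lemma lam_factor:
  fixes lam c :: real and N :: nat
  assumes "0 < lam" "lam \<le> 1" "real N \<le> c"
  shows "1 \<le> lam ^ N * lam powr (- c)"
proof -
  have "lam ^ N * lam powr (- c) = lam powr (- (c - real N))"
    using assms by (simp add: powr_realpow[symmetric] powr_add[symmetric])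
  also have "\<dots> = 1 / lam powr (c - real N)" by (rule powr_minus_divide)
  also have "1 \<le> \<dots>"
  proof -
    have "lam powr (c - real N) \<le> 1" using assms by (intro powr_le1) auto
    moreover have "0 < lam powr (c - real N)" using assms by simp
    ultimately show ?thesis by simp
  qed
  finally show ?thesis by simp
qed

lemma card_split:
  assumes "finite I"
  shows "card {i\<in>I. P i} = card I - card {i\<in>I. \<not> P i}"
proof -
  have "{i\<in>I. P i} = I - {i\<in>I. \<not> P i}" by auto
  thus ?thesis using assms by (simp add: card_Diff_subset)
qed

lemma main_bound:
  fixes R :: "('a, 'b) ring_scheme"
  assumes fR: "field R" and fin: "finite (carrier R)" and l1: "1 \<le> l" and lq: "l < card (carrier R)"
    and T: "\<forall>i<n. T i \<subseteq> carrier R \<and> card (T i) = l"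
    and k0: "0 < k" and kn: "k < n" and kr: "real k \<le> \<rho> * real n" and kr2: "\<rho> * real n < real k + 1"
    and rq: "real k / real n \<le> 1 - real l / real (card (carrier R))"
    and \<alpha>: "\<alpha> \<in> carrier R" "\<alpha> \<noteq> \<zero>\<^bsub>R\<^esub>" and \<beta>: "\<beta> \<in> carrier R" "\<beta> \<noteq> \<zero>\<^bsub>R\<^esub>" and z: "z \<in> fvecs R n"
    and lam0: "0 < lam" and lam1: "lam \<le> 1"
  defines "r \<equiv> real k / real n"
  defines "q \<equiv> real (card (carrier R))"
  shows "real (card {(x, y) \<in> lr_ball R n \<rho> T \<times> lr_ball R n \<rho> T.
             vlin R n \<alpha> x \<beta> y \<in> vtrans R n (lr_ball R n \<rho> T) z}) / real (card (lr_ball R n \<rho> T)) ^ 2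
         \<le> (real n + 1) ^ 2 * lam powr (- \<rho> * real n) * (1 - (1 - lam) * (2 * r - r ^ 2 * q / (q - real l))) ^ n"
proof -
  interpret F: field R by fact
  let ?F = "carrier R"
  let ?V = "fvecs R n"
  let ?B = "lr_ball R n \<rho> T"
  define E where "E = {(x, y) \<in> ?B \<times> ?B. vlin R n \<alpha> x \<beta> y \<in> vtrans R n ?B z}"
  define s0 where "s0 = 2 * r - r ^ 2 * q / (q - real l)"
  define a where "a = (1 - r) / real l"
  define b where "b = r / (q - real l)"
  define \<mu> where "\<mu> i u = (if u \<in> T i then a else b)" for i u
  define w where "w x = (\<Prod>i<n. \<mu> i (x i))" for x
  define W where "W = a ^ (n - k) * b ^ k"
  define nl where "nl i u v \<longleftrightarrow> \<alpha> \<otimes>\<^bsub>R\<^esub> u \<oplus>\<^bsub>R\<^esub> \<beta> \<otimes>\<^bsub>R\<^esub> v \<ominus>\<^bsub>R\<^esub> z i \<notin> T i" for i u v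
  define N where "N x y = card {i\<in>{..<n}. nl i (x i) (y i)}" for x y
  have npos: "real n > 0" using kn by simp
  have ql: "q - real l > 0" using lq by (simp add: q_def)
  have lpos: "real l > 0" using l1 by simp
  have r0: "0 < r" using k0 kn by (simp add: r_def)
  have r1: "r < 1" using kn by (simp add: r_def)
  have a0: "a > 0" using r1 lpos by (simp add: a_def)
  have b0: "b > 0" using r0 ql by (simp add: b_def)
  have ba: "b \<le> a"
  proof -
    have "r * q \<le> q - real l" using rq lq by (simp add: r_def q_def field_simps)
    hence "r * real l \<le> (1 - r) * (q - real l)" by (simp add: algebra_simps)
    thus ?thesis using ql lpos by (simp add: a_def b_def field_simps)
  qed
  have W0: "W > 0" using a0 b0 by (simp add: W_def)
  have finV: "finite ?V" unfolding fvecs_def using fin by (simp add: finite_PiE)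
  have BV: "?B \<subseteq> ?V" unfolding lr_ball_def by blast
  have finB: "finite ?B" using BV finV by (rule finite_subset)
  have Vmem: "x i \<in> ?F" if "x \<in> ?V" "i < n" for x i
    using that unfolding fvecs_def by (auto intro: PiE_mem)
  have w0: "w x \<ge> 0" for x unfolding w_def \<mu>_def using a0 b0 by (intro prod_nonneg) auto
  have wB: "W \<le> w x" if "x \<in> ?B" for x
  proof -
    define e where "e = card {i\<in>{..<n}. x i \<notin> T i}"
    have "real e \<le> \<rho> * real n" using that by (simp add: lr_ball_def e_def)
    hence ek: "e \<le> k" using kr2 by linarith
    have "w x = a ^ card {i\<in>{..<n}. x i \<in> T i} * b ^ e"
      unfolding w_def \<mu>_def e_def by (rule prod_if_card) simp
    also have "card {i\<in>{..<n}. x i \<in> T i} = n - e"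
      using card_split[of "{..<n}" "\<lambda>i. x i \<in> T i"] by (simp add: e_def)
    finally have "w x = a ^ (n - e) * b ^ e" .
    thus ?thesis unfolding W_def using pow_mono_ab[of b a e k n] ba b0 ek kn by simp
  qed
  have BW: "1 / (real n + 1) \<le> real (card ?B) * W"
  proof -
    have "real (n choose k) * real (card ?F - l) ^ k * real l ^ (n - k) \<le> real (card ?B)"
      using card_ball_lower[OF fin T, of k \<rho>] kn kr by simp
    hence "real (n choose k) * real (card ?F - l) ^ k * real l ^ (n - k) * W \<le> real (card ?B) * W"
      using W0 by (intro mult_right_mono) auto
    moreover have "real (n choose k) * real (card ?F - l) ^ k * real l ^ (n - k) * W
        = real (n choose k) * r ^ k * (1 - r) ^ (n - k)"
    proof -
      have "real (card ?F - l) = q - real l" using lq by (simp add: q_def of_nat_diff)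
      hence e1: "real (card ?F - l) ^ k * b ^ k = r ^ k"
        using ql by (simp add: b_def power_mult_distrib[symmetric])
      have e2: "real l ^ (n - k) * a ^ (n - k) = (1 - r) ^ (n - k)"
        using lpos by (simp add: a_def power_mult_distrib[symmetric])
      have "real (n choose k) * real (card ?F - l) ^ k * real l ^ (n - k) * W
          = real (n choose k) * (real (card ?F - l) ^ k * b ^ k) * (real l ^ (n - k) * a ^ (n - k))"
        unfolding W_def by (simp only: mult_ac)
      thus ?thesis unfolding e1 e2 by simp
    qed
    moreover have "1 / (real n + 1) \<le> real (n choose k) * r ^ k * (1 - r) ^ (n - k)"
      using mode_bound[OF k0 kn] by (simp add: r_def)
    ultimately show ?thesis by linarith
  qed
  have EN: "real (N x y) \<le> \<rho> * real n" if "(x, y) \<in> E" for x y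
  proof -
    have xB: "x \<in> ?B" and yB: "y \<in> ?B" and vt: "vlin R n \<alpha> x \<beta> y \<in> vtrans R n ?B z"
      using that by (auto simp: E_def)
    obtain t where tB: "t \<in> ?B" and teq: "vlin R n \<alpha> x \<beta> y = restrict (\<lambda>i. t i \<oplus>\<^bsub>R\<^esub> z i) {..<n}"
      using vt unfolding vtrans_def by blast
    have "nl i (x i) (y i) \<longleftrightarrow> t i \<notin> T i" if "i < n" for i
    proof -
      have xi: "x i \<in> ?F" using Vmem xB BV that by blast
      have yi: "y i \<in> ?F" using Vmem yB BV that by blast
      have ti: "t i \<in> ?F" using Vmem tB BV that by blast
      have zi: "z i \<in> ?F" using Vmem z that by blast
      have "\<alpha> \<otimes>\<^bsub>R\<^esub> x i \<oplus>\<^bsub>R\<^esub> \<beta> \<otimes>\<^bsub>R\<^esub> y i = t i \<oplus>\<^bsub>R\<^esub> z i"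
        using fun_cong[OF teq, of i] that by (simp add: vlin_def)
      hence "\<alpha> \<otimes>\<^bsub>R\<^esub> x i \<oplus>\<^bsub>R\<^esub> \<beta> \<otimes>\<^bsub>R\<^esub> y i \<ominus>\<^bsub>R\<^esub> z i = t i"
        using ti zi by (simp add: a_minus_def F.a_assoc F.r_neg)
      thus ?thesis by (simp add: nl_def)
    qed
    hence "{i\<in>{..<n}. nl i (x i) (y i)} = {i\<in>{..<n}. t i \<notin> T i}" by auto
    thus ?thesis using tB by (simp add: N_def lr_ball_def)
  qed
  define G where "G x y = (w x * w y / W ^ 2) * (lam ^ N x y * lam powr (- \<rho> * real n))" for x y
  have G0: "G x y \<ge> 0" for x y using w0 W0 lam0 by (simp add: G_def)
  have "real (card E) = (\<Sum>p\<in>E. 1)" by simp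
  also have "\<dots> \<le> (\<Sum>p\<in>E. G (fst p) (snd p))"
  proof (rule sum_mono)
    fix p assume pE: "p \<in> E"
    obtain x y where p: "p = (x, y)" by (cases p)
    have xB: "x \<in> ?B" and yB: "y \<in> ?B" using pE p by (auto simp: E_def)
    have "W * W \<le> w x * w y" using wB[OF xB] wB[OF yB] W0 by (intro mult_mono) auto
    hence g1: "1 \<le> w x * w y / W ^ 2" using W0 by (simp add: power2_eq_square)
    have g2: "1 \<le> lam ^ N x y * lam powr (- \<rho> * real n)"
      using lam_factor[OF lam0 lam1 EN[OF pE[unfolded p]]] by simp
    have "1 * 1 \<le> (w x * w y / W ^ 2) * (lam ^ N x y * lam powr (- \<rho> * real n))"
      using g1 g2 by (intro mult_mono) auto
    thus "1 \<le> G (fst p) (snd p)" by (simp add: p G_def)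
  qed
  also have "\<dots> \<le> (\<Sum>p\<in>?V \<times> ?V. G (fst p) (snd p))"
    using finV G0 BV by (intro sum_mono2) (auto simp: E_def)
  also have "\<dots> = (\<Sum>x\<in>?V. \<Sum>y\<in>?V. G x y)" by (simp add: sum.cartesian_product split_beta)
  also have "\<dots> = (lam powr (- \<rho> * real n) / W ^ 2) * (\<Sum>x\<in>?V. \<Sum>y\<in>?V. w x * w y * lam ^ N x y)"
    by (simp add: G_def sum_distrib_left mult_ac)
  also have "(\<Sum>x\<in>?V. \<Sum>y\<in>?V. w x * w y * lam ^ N x y)
      = (\<Prod>i<n. \<Sum>u\<in>?F. \<Sum>v\<in>?F. \<mu> i u * \<mu> i v * (if nl i u v then lam else 1))"
  proof -
    have "w x * w y * lam ^ N x y = (\<Prod>i<n. \<mu> i (x i) * \<mu> i (y i) * (if nl i (x i) (y i) then lam else 1))" for x y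
    proof -
      have "lam ^ N x y = (\<Prod>i<n. if nl i (x i) (y i) then lam else 1)"
        unfolding N_def by (subst prod_if_card) auto
      thus ?thesis unfolding w_def by (simp add: prod.distrib)
    qed
    hence "(\<Sum>x\<in>?V. \<Sum>y\<in>?V. w x * w y * lam ^ N x y)
        = (\<Sum>x\<in>?V. \<Sum>y\<in>?V. \<Prod>i<n. \<mu> i (x i) * \<mu> i (y i) * (if nl i (x i) (y i) then lam else 1))" by simp
    also have "\<dots> = (\<Prod>i<n. \<Sum>u\<in>?F. \<Sum>v\<in>?F. \<mu> i u * \<mu> i v * (if nl i u v then lam else 1))"
      unfolding fvecs_def by (rule double_prod_sum) (use fin in auto)
    finally show ?thesis .
  qed
  also have "lam powr (- \<rho> * real n) / W ^ 2 * (\<Prod>i<n. \<Sum>u\<in>?F. \<Sum>v\<in>?F. \<mu> i u * \<mu> i v * (if nl i u v then lam else 1)) \<le> lam powr (- \<rho> * real n) / W ^ 2 * (\<Prod>i<n. 1 - (1 - lam) * s0)"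
  proof (rule mult_left_mono)
    show "0 \<le> lam powr (- \<rho> * real n) / W ^ 2" using W0 lam0 by simp
  next
   show "(\<Prod>i<n. \<Sum>u\<in>?F. \<Sum>v\<in>?F. \<mu> i u * \<mu> i v * (if nl i u v then lam else 1)) \<le> (\<Prod>i<n. 1 - (1 - lam) * s0)"
  proof (rule prod_mono)
    fix i assume "i \<in> {..<n}"
    hence i: "i < n" by simp
    have zi: "z i \<in> ?F" using Vmem z i by blast
    show "0 \<le> (\<Sum>u\<in>?F. \<Sum>v\<in>?F. \<mu> i u * \<mu> i v * (if nl i u v then lam else 1)) \<and>
          (\<Sum>u\<in>?F. \<Sum>v\<in>?F. \<mu> i u * \<mu> i v * (if nl i u v then lam else 1)) \<le> 1 - (1 - lam) * s0"
    proof
      show "0 \<le> (\<Sum>u\<in>?F. \<Sum>v\<in>?F. \<mu> i u * \<mu> i v * (if nl i u v then lam else 1))"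
        using a0 b0 lam0 by (intro sum_nonneg) (auto simp: \<mu>_def)
      show "(\<Sum>u\<in>?F. \<Sum>v\<in>?F. \<mu> i u * \<mu> i v * (if nl i u v then lam else 1)) \<le> 1 - (1 - lam) * s0"
        using coord_bound[OF fR fin _ _ l1 lq \<alpha> \<beta> zi, of "T i" r lam] T i r0 r1 lam0 lam1
        unfolding \<mu>_def a_def b_def nl_def s0_def q_def by simp
    qed
  qed
  qed
  also have "(\<Prod>i<n. 1 - (1 - lam) * s0) = (1 - (1 - lam) * s0) ^ n" by simp
  finally have cE: "real (card E) \<le> lam powr (- \<rho> * real n) / W ^ 2 * (1 - (1 - lam) * s0) ^ n"
    by simp
  define X where "X = (1 - (1 - lam) * s0) ^ n"
  have s01: "s0 \<le> 1"
  proof -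
    have "r ^ 2 \<le> r ^ 2 * q / (q - real l)"
      using ql lpos by (simp add: field_simps q_def)
    moreover have "2 * r - r ^ 2 \<le> 1"
    proof -
      have h: "(1 - r) ^ 2 = 1 - 2 * r + r ^ 2" by (simp add: power2_eq_square algebra_simps)
      have "0 \<le> (1 - r) ^ 2" by simp
      thus ?thesis using h by linarith
    qed
    ultimately show ?thesis unfolding s0_def by linarith
  qed
  have "(1 - lam) * s0 \<le> 1"
  proof (cases "s0 \<ge> 0")
    case True
    hence "(1 - lam) * s0 \<le> 1 * s0" using lam0 by (intro mult_right_mono) auto
    thus ?thesis using s01 by simp
  next
    case False
    hence "(1 - lam) * s0 \<le> 0" using lam1 by (simp add: mult_nonneg_nonpos)
    thus ?thesis by simp
  qed
  hence X0: "X \<ge> 0" by (simp add: X_def)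
  define Y where "Y = lam powr (- \<rho> * real n) * X"
  have Y0: "Y \<ge> 0" using X0 lam0 by (simp add: Y_def)
  have Bpos: "real (card ?B) * W > 0"
  proof -
    have "0 < 1 / (real n + 1)" using npos by simp
    thus ?thesis using BW by linarith
  qed
  have "real (card E) / real (card ?B) ^ 2 \<le> (Y / W ^ 2) / real (card ?B) ^ 2"
    using cE by (intro divide_right_mono) (auto simp: Y_def X_def)
  also have "\<dots> = Y * (1 / (real (card ?B) * W)) ^ 2" by (simp add: power2_eq_square field_simps)
  also have "\<dots> \<le> Y * (real n + 1) ^ 2"
  proof (rule mult_left_mono[OF _ Y0])
    have "1 / (real (card ?B) * W) \<le> real n + 1"
      using BW Bpos npos by (simp add: field_simps)
    thus "(1 / (real (card ?B) * W)) ^ 2 \<le> (real n + 1) ^ 2"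
      using Bpos by (intro power_mono) auto
  qed
  finally show ?thesis unfolding E_def Y_def X_def s0_def by (simp add: mult_ac)
qed


lemma n_large:
  fixes B n :: real
  assumes B4: "B \<ge> 4" and nB: "n \<ge> B powr 14"
  shows "n \<ge> 8 * B" "256 * B ^ 2 * ln (n + 1) \<le> n" "n \<ge> B"
proof -
  have Bp: "B > 0" using B4 by simp
  have "B powr 14 = B ^ 14" using Bp by (simp add: powr_realpow)
  hence nB': "n \<ge> B ^ 14" using nB by simp
  have b10: "B ^ 10 \<ge> 4 ^ 10" using B4 by (intro power_mono) auto
  have B1: "B \<ge> 1" using B4 by simp
  have e: "B ^ 14 = B ^ 10 * B ^ 4" by (simp add: power_add[symmetric])
  have "4 ^ 10 * B ^ 4 \<le> B ^ 10 * B ^ 4" by (rule mult_right_mono[OF b10]) simp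
  hence "B ^ 14 \<ge> 4 ^ 10 * B ^ 4" unfolding e .
  hence n1: "n \<ge> 1048576 * B ^ 4" using nB' by simp
  have B4pow: "B ^ 4 \<ge> B" using B1 by (metis one_le_power power_one_right power_increasing one_le_numeral order_trans le_numeral_extra(4) numeral_le_iff semiring_norm(69) zero_le_numeral)
  show "n \<ge> 8 * B" using n1 B4pow Bp by linarith
  show "n \<ge> B" using n1 B4pow Bp by linarith
  have npos: "n \<ge> 1" using n1 B4pow B1 by linarith
  define s where "s = sqrt n"
  have n0: "0 \<le> n" using npos by simp
  have ss: "s * s = n" using n0 by (simp add: s_def)
  have s0: "s \<ge> 0" using n0 by (simp add: s_def)
  have "(1024 * B ^ 2) ^ 2 = 1048576 * B ^ 4" by (simp add: power_mult_distrib power_mult[symmetric])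
  hence "(1024 * B ^ 2) ^ 2 \<le> n" using n1 by simp
  hence sB: "1024 * B ^ 2 \<le> s" unfolding s_def by (rule real_le_rsqrt)
  have sq: "sqrt (n + 1) \<le> 3 / 2 * s"
  proof -
    have "n + 1 \<le> (3 / 2 * s) ^ 2" using ss npos by (simp add: power2_eq_square algebra_simps)
    hence "sqrt (n + 1) \<le> sqrt ((3 / 2 * s) ^ 2)" by (rule real_sqrt_le_mono)
    also have "\<dots> = 3 / 2 * s" using s0 by simp
    finally show ?thesis .
  qed
  have "ln (n + 1) = 2 * ln (sqrt (n + 1))" using npos by (simp add: ln_sqrt)
  also have "ln (sqrt (n + 1)) \<le> sqrt (n + 1) - 1" using npos by (intro ln_le_minus_one) simp
  hence "2 * ln (sqrt (n + 1)) \<le> 3 * s" using sq by linarith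
  finally have lnb: "ln (n + 1) \<le> 3 * s" .
  have "256 * B ^ 2 * ln (n + 1) \<le> 256 * B ^ 2 * (3 * s)"
    using lnb by (intro mult_left_mono) auto
  also have "\<dots> = 768 * B ^ 2 * s" by simp
  also have "\<dots> \<le> s * s" using sB s0 by (intro mult_right_mono) auto
  finally show "256 * B ^ 2 * ln (n + 1) \<le> n" using ss by simp
qed



lemma delta_bound:
  fixes q l \<rho> g :: real
  assumes q2: "q \<ge> 2" and l1: "1 \<le> l" and lq: "l < q" and \<rho>0: "0 < \<rho>" and \<rho>1: "\<rho> < 1" and g0: "0 \<le> g"
  shows "log q ((q - l) * (1 - \<rho>) / (\<rho> * l)) * (\<rho> ^ 4 * g ^ 2 / (16 * log 2 q)) * ln q \<le> \<rho> * g ^ 2 / 16"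
proof -
  define K where "K = (q - l) * (1 - \<rho>) / (\<rho> * l)"
  have K0: "K > 0" using lq \<rho>0 \<rho>1 l1 by (simp add: K_def)
  have lnq: "ln q > 0" using q2 by simp
  have L2: "log 2 q \<ge> 1" using q2 by simp
  have L2': "log 2 q \<ge> ln q"
  proof -
    have "ln (2::real) \<le> 1" using ln_le_minus_one[of "2::real"] by simp
    hence "ln q \<le> ln q / ln 2" using lnq by (simp add: field_simps)
    thus ?thesis by (simp add: log_def)
  qed
  have Kq: "K \<le> q / \<rho>"
  proof -
    have "(q - l) * (1 - \<rho>) \<le> q * l"
    proof -
      have "(q - l) * (1 - \<rho>) \<le> q * 1" using lq l1 \<rho>0 \<rho>1 by (intro mult_mono) auto
      also have "\<dots> \<le> q * l" using l1 q2 by (intro mult_left_mono) auto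
      finally show ?thesis .
    qed
    hence "(q - l) * (1 - \<rho>) / (\<rho> * l) \<le> q * l / (\<rho> * l)" using \<rho>0 l1 by (intro divide_right_mono) auto
    thus ?thesis using l1 by (simp add: K_def)
  qed
  have lnK: "ln K \<le> ln q + (1 / \<rho> - 1)"
  proof -
    have "ln K \<le> ln (q / \<rho>)" using K0 Kq by simp
    also have "\<dots> = ln q + ln (1 / \<rho>)" using q2 \<rho>0 by (simp add: ln_div)
    also have "ln (1 / \<rho>) \<le> 1 / \<rho> - 1" using \<rho>0 by (intro ln_le_minus_one) simp
    finally show ?thesis by simp
  qed
  have key: "\<rho> ^ 4 * ln K \<le> \<rho> * log 2 q"
  proof -
    have "\<rho> ^ 4 * ln K \<le> \<rho> ^ 4 * (ln q + (1 / \<rho> - 1))" using lnK \<rho>0 by (intro mult_left_mono) auto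
    also have "\<dots> = \<rho> * (\<rho> ^ 3 * ln q + \<rho> ^ 2 * (1 - \<rho>))" using \<rho>0 by (simp add: field_simps power_def)
    also have "\<rho> ^ 3 * ln q + \<rho> ^ 2 * (1 - \<rho>) \<le> \<rho> ^ 3 * log 2 q + \<rho> ^ 2 * (1 - \<rho>) * log 2 q"
    proof -
      have "\<rho> ^ 3 * ln q \<le> \<rho> ^ 3 * log 2 q" using L2' \<rho>0 by (intro mult_left_mono) auto
      moreover have "\<rho> ^ 2 * (1 - \<rho>) * 1 \<le> \<rho> ^ 2 * (1 - \<rho>) * log 2 q" using L2 \<rho>0 \<rho>1 by (intro mult_left_mono) auto
      ultimately show ?thesis by simp
    qed
    also have "\<dots> = \<rho> ^ 2 * log 2 q" by (simp add: algebra_simps power_def)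
    also have "\<dots> \<le> 1 * log 2 q" using \<rho>0 \<rho>1 L2 by (intro mult_right_mono) (auto simp: power_le_one)
    finally show ?thesis using \<rho>0 by (simp add: mult_left_mono)
  qed
  have "log q K * (\<rho> ^ 4 * g ^ 2 / (16 * log 2 q)) * ln q = (\<rho> ^ 4 * ln K) * g ^ 2 / (16 * log 2 q)"
    using lnq by (simp add: log_def field_simps)
  also have "\<dots> \<le> (\<rho> * log 2 q) * g ^ 2 / (16 * log 2 q)"
    using key L2 by (intro divide_right_mono mult_right_mono) auto
  also have "\<dots> = \<rho> * g ^ 2 / 16" using L2 by simp
  finally show ?thesis unfolding K_def .
qed

lemma final_numeric:
  fixes q l \<rho> r g :: real and n :: nat
  assumes q2: "q \<ge> 2" and l1: "1 \<le> l" and lq: "l < q" and \<rho>0: "0 < \<rho>"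
    and gdef: "g = 1 - l / q - \<rho>" and g0: "0 < g"
    and n1: "real n \<ge> 1" and rl: "\<rho> - 1 / real n < r" and ru: "r \<le> \<rho>" and r0: "0 \<le> r"
    and nbig: "8 / (\<rho> * g) \<le> real n" and lnb: "2 * ln (real n + 1) \<le> real n * \<rho> * g ^ 2 / 128"
  defines "t \<equiv> 3 * g / 16"
  shows "(real n + 1) ^ 2 * (1 - t) powr (- \<rho> * real n) * (1 - t * (2 * r - r ^ 2 * q / (q - l))) ^ n
         \<le> q powr (- (log q ((q - l) * (1 - \<rho>) / (\<rho> * l)) * (\<rho> ^ 4 * g ^ 2 / (16 * log 2 q))) * real n)"
proof -
  define s0 where "s0 = 2 * r - r ^ 2 * q / (q - l)"
  define c where "c = q / (q - l)"
  define \<delta> where "\<delta> = log q ((q - l) * (1 - \<rho>) / (\<rho> * l)) * (\<rho> ^ 4 * g ^ 2 / (16 * log 2 q))"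
  have ql: "q - l > 0" using lq by simp
  have c1: "c \<ge> 1" using ql l1 by (simp add: c_def field_simps)
  have gl: "l / q > 0" using l1 q2 by simp
  have g1: "g < 1" using gdef gl \<rho>0 by simp
  have \<rho>1: "\<rho> < 1" using gdef gl g0 by simp
  have np: "real n > 0" using n1 by simp
  have s0c: "s0 = 2 * r - r ^ 2 * c" by (simp add: s0_def c_def)
  have gc: "1 - \<rho> * c = g * c"
    using ql q2 by (simp add: c_def gdef field_simps)
  have s0lb: "s0 \<ge> \<rho> + 3 / 4 * \<rho> * g"
  proof -
    have "(2 * \<rho> - \<rho> ^ 2 * c) - s0 = 2 * (\<rho> - r) - (\<rho> ^ 2 - r ^ 2) * c" by (simp add: s0c algebra_simps)
    also have "\<dots> \<le> 2 * (\<rho> - r)"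
    proof -
      have "r ^ 2 \<le> \<rho> ^ 2" using r0 ru by (intro power_mono) auto
      thus ?thesis using c1 by (simp add: mult_nonneg_nonneg)
    qed
    also have "\<dots> \<le> 2 / real n" using rl by (simp add: field_simps)
    also have "\<dots> \<le> \<rho> * g / 4"
    proof -
      have "8 \<le> real n * (\<rho> * g)" using nbig \<rho>0 g0 by (simp add: field_simps)
      thus ?thesis using np by (simp add: field_simps)
    qed
    finally have a: "s0 \<ge> 2 * \<rho> - \<rho> ^ 2 * c - \<rho> * g / 4" by simp
    have "2 * \<rho> - \<rho> ^ 2 * c = \<rho> + \<rho> * (1 - \<rho> * c)" by (simp add: algebra_simps power2_eq_square)
    also have "\<dots> = \<rho> + \<rho> * g * c" using gc by simp
    also have "\<dots> \<ge> \<rho> + \<rho> * g * 1" using c1 \<rho>0 g0 by (intro add_left_mono mult_left_mono) auto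
    finally show ?thesis using a by simp
  qed
  have t0: "0 < t" "t \<le> 1 / 2" using g0 g1 by (auto simp: t_def)
  have s0ub: "s0 \<le> 2" using s0c c1 r0 ru \<rho>1 by (smt (verit) mult_nonneg_nonneg zero_le_power2)
  have ts: "0 < 1 - t * s0"
  proof -
    have "t * s0 \<le> t * 2" using t0 s0ub by (intro mult_left_mono) auto
    moreover have "t * 2 < 1" using g1 by (simp add: t_def)
    ultimately show ?thesis by simp
  qed
  have ln1: "ln (1 - t) \<ge> - t - 2 * t ^ 2" using ln_one_minus_pos_lower_bound[of t] t0 by simp
  have ln2: "ln (1 - t * s0) \<le> - (t * s0)" using ln_le_minus_one[OF ts] by simp
  define E1 where "E1 = 2 * ln (real n + 1) + (- \<rho> * real n) * ln (1 - t) + real n * ln (1 - t * s0)"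
  have "E1 \<le> 2 * ln (real n + 1) + \<rho> * real n * (t + 2 * t ^ 2) - real n * (t * s0)"
  proof -
    have "(- \<rho> * real n) * ln (1 - t) \<le> (\<rho> * real n) * (t + 2 * t ^ 2)"
    proof -
      have m: "(\<rho> * real n) * (- t - 2 * t ^ 2) \<le> (\<rho> * real n) * ln (1 - t)"
        using ln1 \<rho>0 np by (intro mult_left_mono) auto
      have eq1: "(\<rho> * real n) * (- t - 2 * t ^ 2) = - ((\<rho> * real n) * (t + 2 * t ^ 2))" by (simp add: algebra_simps)
      have eq2: "(- \<rho> * real n) * ln (1 - t) = - ((\<rho> * real n) * ln (1 - t))" by simp
      show ?thesis using m eq1 eq2 by linarith
    qed
    moreover have "real n * ln (1 - t * s0) \<le> real n * (- (t * s0))"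
      using ln2 np by (intro mult_left_mono) auto
    ultimately show ?thesis unfolding E1_def by simp
  qed
  also have "\<dots> \<le> 2 * ln (real n + 1) + real n * (\<rho> * (t + 2 * t ^ 2) - t * (\<rho> + 3 / 4 * \<rho> * g))"
  proof -
    have "real n * (t * (\<rho> + 3 / 4 * \<rho> * g)) \<le> real n * (t * s0)"
      using s0lb t0 np by (intro mult_left_mono) auto
    thus ?thesis by (simp add: algebra_simps)
  qed
  also have "\<rho> * (t + 2 * t ^ 2) - t * (\<rho> + 3 / 4 * \<rho> * g) = - 9 / 128 * \<rho> * g ^ 2"
    by (simp add: t_def power2_eq_square algebra_simps)
  also have "2 * ln (real n + 1) + real n * (- 9 / 128 * \<rho> * g ^ 2) \<le> - (real n * (\<rho> * g ^ 2 / 16))"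
    using lnb by (simp add: algebra_simps)
  also have "- (real n * (\<rho> * g ^ 2 / 16)) \<le> - (real n * (\<delta> * ln q))"
  proof -
    have "\<delta> * ln q \<le> \<rho> * g ^ 2 / 16"
      using delta_bound[OF q2 l1 lq \<rho>0 \<rho>1, of g] g0 by (simp add: \<delta>_def)
    thus ?thesis using np by (simp add: mult_left_mono)
  qed
  finally have E1b: "E1 \<le> - \<delta> * real n * ln q" by (simp add: algebra_simps)
  have "(real n + 1) ^ 2 * (1 - t) powr (- \<rho> * real n) * (1 - t * s0) ^ n = exp E1"
  proof -
    have e1: "(real n + 1) ^ 2 = exp (2 * ln (real n + 1))"
    proof -
      have "2 * ln (real n + 1) = ln ((real n + 1) ^ 2)" using ln_realpow[of "real n + 1" 2] by simp
      thus ?thesis by simp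
    qed
    have e2: "(1 - t) powr (- \<rho> * real n) = exp ((- \<rho> * real n) * ln (1 - t))"
      using t0 by (simp add: powr_def)
    have e3: "(1 - t * s0) ^ n = exp (real n * ln (1 - t * s0))"
    proof -
      have "real n * ln (1 - t * s0) = ln ((1 - t * s0) ^ n)" using ln_realpow[of "1 - t * s0" n] ts by simp
      thus ?thesis using ts by simp
    qed
    show ?thesis unfolding e1 e2 e3 E1_def by (simp only: exp_add)
  qed
  also have "\<dots> \<le> exp (- \<delta> * real n * ln q)" using E1b by simp
  also have "\<dots> = q powr (- \<delta> * real n)" using q2 by (simp add: powr_def mult_ac)
  finally show ?thesis unfolding s0_def \<delta>_def by simp
qed



theorem corollary4p6:
  shows "\<exists>c::real. c > 0 \<and>
    (\<forall>(R :: nat ring) (n::nat) (l::nat) (\<rho>::real) (T :: nat \<Rightarrow> nat set).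
      field R \<longrightarrow> finite (carrier R) \<longrightarrow>
      (let q = card (carrier R) in
        1 \<le> l \<longrightarrow> l < q \<longrightarrow> 0 < \<rho> \<longrightarrow> \<rho> < 1 - real l / real q \<longrightarrow>
        (\<forall>i<n. T i \<subseteq> carrier R \<and> card (T i) = l) \<longrightarrow>
        real n \<ge> (log 2 (real q) / (\<rho> * (1 - real l / real q - \<rho>))) powr c \<longrightarrow>
        mixing R n
          (log (real q) ((real q - real l) * (1 - \<rho>) / (\<rho> * real l))
             * (\<rho> ^ 4 * (1 - real l / real q - \<rho>) ^ 2 / (16 * log 2 (real q))))
          (lr_ball R n \<rho> T)))"
proof (intro exI[of _ 14] conjI allI impI)
  show "(14::real) > 0" by simp
  fix R :: "nat ring" and n l :: nat and \<rho> :: real and T :: "nat \<Rightarrow> nat set"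
  assume fR: "field R" and fin: "finite (carrier R)"
  show "let q = card (carrier R) in
        1 \<le> l \<longrightarrow> l < q \<longrightarrow> 0 < \<rho> \<longrightarrow> \<rho> < 1 - real l / real q \<longrightarrow>
        (\<forall>i<n. T i \<subseteq> carrier R \<and> card (T i) = l) \<longrightarrow>
        real n \<ge> (log 2 (real q) / (\<rho> * (1 - real l / real q - \<rho>))) powr 14 \<longrightarrow>
        mixing R n
          (log (real q) ((real q - real l) * (1 - \<rho>) / (\<rho> * real l))
             * (\<rho> ^ 4 * (1 - real l / real q - \<rho>) ^ 2 / (16 * log 2 (real q))))
          (lr_ball R n \<rho> T)"
    unfolding Let_def
  proof (intro impI)
    let ?q = "card (carrier R)"
    assume l1: "1 \<le> l" and lq: "l < ?q" and \<rho>0: "0 < \<rho>" and \<rho>q: "\<rho> < 1 - real l / real ?q"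
      and T: "\<forall>i<n. T i \<subseteq> carrier R \<and> card (T i) = l"
      and nB: "real n \<ge> (log 2 (real ?q) / (\<rho> * (1 - real l / real ?q - \<rho>))) powr 14"
    define g where "g = 1 - real l / real ?q - \<rho>"
    define B0 where "B0 = log 2 (real ?q) / (\<rho> * g)"
    have q2: "real ?q \<ge> 2" using l1 lq by linarith
    have g0: "g > 0" using \<rho>q by (simp add: g_def)
    have lq0: "real l / real ?q \<ge> 0" by simp
    have g1: "g \<le> 1 - \<rho>" using lq0 by (simp add: g_def)
    have \<rho>1: "\<rho> < 1" using g0 g1 by simp
    have L2: "log 2 (real ?q) \<ge> 1" using q2 by simp
    have \<rho>g0: "\<rho> * g > 0" using \<rho>0 g0 by simp
    have \<rho>g: "\<rho> * g \<le> 1 / 4"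
    proof -
      have "\<rho> * g \<le> \<rho> * (1 - \<rho>)" using g1 \<rho>0 by (intro mult_left_mono) auto
      also have "\<dots> \<le> 1 / 4"
      proof -
        have "0 \<le> (\<rho> - 1/2) ^ 2" by simp
        moreover have "(\<rho> - 1/2) ^ 2 = \<rho> ^ 2 - \<rho> + 1/4" by (simp add: power2_eq_square algebra_simps)
        moreover have "\<rho> * (1 - \<rho>) = \<rho> - \<rho> ^ 2" by (simp add: power2_eq_square algebra_simps)
        ultimately show ?thesis by linarith
      qed
      finally show ?thesis .
    qed
    have B0inv: "B0 \<ge> 1 / (\<rho> * g)" using L2 \<rho>g0 by (simp add: B0_def divide_right_mono)
    have B04: "B0 \<ge> 4"
    proof -
      have "4 \<le> 1 / (\<rho> * g)" using \<rho>g \<rho>g0 by (simp add: field_simps)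
      thus ?thesis using B0inv by linarith
    qed
    have nL: "real n \<ge> 8 * B0" "256 * B0 ^ 2 * ln (real n + 1) \<le> real n" "real n \<ge> B0"
      using n_large[OF B04] nB by (simp_all add: B0_def g_def)
    have B0pos: "B0 > 0" using B04 by simp
    have \<rho>gB: "\<rho> * g \<ge> 1 / B0" using B0inv \<rho>g0 B0pos by (simp add: field_simps)
    have n1: "real n \<ge> 1" using nL B04 by linarith
    have nbig: "8 / (\<rho> * g) \<le> real n" using B0inv nL by linarith
    have lnb: "2 * ln (real n + 1) \<le> real n * \<rho> * g ^ 2 / 128"
    proof -
      have "1 / B0 ^ 2 \<le> (\<rho> * g) ^ 2" using \<rho>gB B0pos by (metis power_mono power_one_over zero_le_divide_1_iff less_imp_le)
      also have "\<dots> \<le> \<rho> * g ^ 2" using \<rho>0 \<rho>1 g0 by (simp add: power2_eq_square mult_right_le_one_le)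
      finally have h: "1 / B0 ^ 2 \<le> \<rho> * g ^ 2" .
      have "2 * ln (real n + 1) \<le> real n / (128 * B0 ^ 2)" using nL(2) B0pos by (simp add: field_simps)
      also have "\<dots> = real n * (1 / B0 ^ 2) / 128" by simp
      also have "\<dots> \<le> real n * (\<rho> * g ^ 2) / 128" using h n1 by (intro divide_right_mono mult_left_mono) auto
      finally show ?thesis by (simp add: mult.assoc)
    qed
    define k where "k = nat \<lfloor>\<rho> * real n\<rfloor>"
    have \<rho>n1: "\<rho> * real n \<ge> 1"
    proof -
      have "\<rho> * g \<le> \<rho> * 1" using g1 \<rho>0 \<rho>1 by (intro mult_left_mono) auto
      hence "\<rho> \<ge> 1 / B0" using \<rho>gB by simp
      hence "\<rho> * real n \<ge> (1 / B0) * B0" using nL(3) B0pos \<rho>0 by (intro mult_mono) auto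
      thus ?thesis using B0pos by simp
    qed
    have fl0: "0 \<le> \<lfloor>\<rho> * real n\<rfloor>" using \<rho>n1 by simp
    have kint: "real k = real_of_int \<lfloor>\<rho> * real n\<rfloor>" using fl0 by (simp add: k_def)
    have kr: "real k \<le> \<rho> * real n" using kint by linarith
    have kr2: "\<rho> * real n < real k + 1" using kint by linarith
    have k0: "0 < k" using \<rho>n1 by (simp add: k_def)
    have kn: "k < n"
    proof -
      have "\<rho> * real n < real n" using \<rho>1 n1 by simp
      thus ?thesis using kr by linarith
    qed
    define r where "r = real k / real n"
    have np: "real n > 0" using n1 by simp
    have ru: "r \<le> \<rho>" using kr np by (simp add: r_def field_simps)
    have rl: "\<rho> - 1 / real n < r"
    proof -
      have "\<rho> * real n / real n < (real k + 1) / real n" using kr2 np by (intro divide_strict_right_mono) auto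
      hence "\<rho> < real k / real n + 1 / real n" using np by (simp add: add_divide_distrib)
      thus ?thesis by (simp add: r_def)
    qed
    have r0: "0 \<le> r" by (simp add: r_def)
    have rq: "real k / real n \<le> 1 - real l / real ?q" using ru \<rho>q by (simp add: r_def)
    define t where "t = 3 * g / 16"
    have lam0: "0 < 1 - t" and lam1: "1 - t \<le> 1" using g0 g1 \<rho>0 by (auto simp: t_def)
    show "mixing R n
          (log (real ?q) ((real ?q - real l) * (1 - \<rho>) / (\<rho> * real l))
             * (\<rho> ^ 4 * (1 - real l / real ?q - \<rho>) ^ 2 / (16 * log 2 (real ?q))))
          (lr_ball R n \<rho> T)"
      unfolding mixing_def
    proof (intro ballI)
      fix \<alpha> \<beta> z
      assume \<alpha>: "\<alpha> \<in> carrier R - {\<zero>\<^bsub>R\<^esub>}" and \<beta>: "\<beta> \<in> carrier R - {\<zero>\<^bsub>R\<^esub>}" and z: "z \<in> fvecs R n"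
      have a1: "\<alpha> \<in> carrier R" and a2: "\<alpha> \<noteq> \<zero>\<^bsub>R\<^esub>" using \<alpha> by auto
      have b1: "\<beta> \<in> carrier R" and b2: "\<beta> \<noteq> \<zero>\<^bsub>R\<^esub>" using \<beta> by auto
      note mb = main_bound[OF fR fin l1 lq T k0 kn kr kr2 rq a1 a2 b1 b2 z lam0 lam1]
      have eq: "1 - (1 - t) = t" by simp
      have l1r: "1 \<le> real l" using l1 by simp
      have lqr: "real l < real ?q" using lq by simp
      note fnum = final_numeric[OF q2 l1r lqr \<rho>0 g_def g0 n1 rl[unfolded r_def] ru[unfolded r_def] r0[unfolded r_def] nbig lnb]
      have "real (card {(x, y) \<in> lr_ball R n \<rho> T \<times> lr_ball R n \<rho> T.
             vlin R n \<alpha> x \<beta> y \<in> vtrans R n (lr_ball R n \<rho> T) z}) / real (card (lr_ball R n \<rho> T)) ^ 2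
         \<le> (real n + 1) ^ 2 * (1 - t) powr (- \<rho> * real n) * (1 - t * (2 * (real k / real n) - (real k / real n) ^ 2 * real ?q / (real ?q - real l))) ^ n"
        using mb unfolding eq .
      also have "\<dots> \<le> real ?q powr (- (log (real ?q) ((real ?q - real l) * (1 - \<rho>) / (\<rho> * real l)) * (\<rho> ^ 4 * g ^ 2 / (16 * log 2 (real ?q)))) * real n)"
        using fnum unfolding t_def .
      finally show "real (card {(x, y) \<in> lr_ball R n \<rho> T \<times> lr_ball R n \<rho> T.
             vlin R n \<alpha> x \<beta> y \<in> vtrans R n (lr_ball R n \<rho> T) z}) / real (card (lr_ball R n \<rho> T)) ^ 2
         \<le> real ?q powr (- (log (real ?q) ((real ?q - real l) * (1 - \<rho>) / (\<rho> * real l)) * (\<rho> ^ 4 * (1 - real l / real ?q - \<rho>) ^ 2 / (16 * log 2 (real ?q)))) * real n)"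
        unfolding g_def .
    qed
  qed
qed

end
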